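(* Let $p$ be a prime, $n\in\mathbb N$, and $G=C_{p^n}$. Consider the monotone map $(\mathfrak R,\nabla):\mathrm{wIndSys}^{uni}_{G}\to\mathrm{Transf}_G\times\mathrm{Fam}_G$ (whose target is isomorphic to $K_{n+2}\times[n+2]$). For a transfer system $R$ and family $\mathcal F$, the fiber satisfies $\mathfrak R^{-1}(R)\cap\nabla^{-1}(\mathcal F)=\emptyset$ if $\mathrm{Domain}(R)\not\subseteq\mathcal F$; it is a single point if $\mathrm{Codomain}(R)\subseteq\mathcal F$; and it is isomorphic to the poset $\mathrm{Sieve}_R(\mathrm{Codomain}(R)-\mathcal F)$ otherwise. Moreover, the map from $\mathrm{wIndSys}^{uni}_G$ onto its image is a cocartesian fibration of posets, with cocartesian transport along $R\le R'$ (fixed $\mathcal F$) given by the map $\mathrm{Sieve}_R(\mathrm{Codomain}(R)-\mathcal F)\to\mathrm{Sieve}_{R'}(\mathrm{Codomain}(R')-\mathcal F)$ sending $\mathfrak S\mapsto R^{\simeq}\cup\{(J\subseteq H)\mid J\subseteq K\subsetneq H,\ (J\subseteq K)\in R',\ (K\subsetneq H)\in\mathfrak S\}$, and cocartesian transport along $\mathcal F\le\mathcal F'$ (fixed $R$) given by the restriction map $\mathrm{Sieve}_R(\mathrm{Codomain}(R)-\mathcal F)\to\mathrm{Sieve}_R(\mathrm{Codomain}(R)-\mathcal F')$.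
   Context: Let $G=C_{p^n}$ with subgroups $e=C_1\subset C_p\subset\cdots\subset C_{p^n}$ and $\mathcal O_G$ its orbit category; finite $G$-sets are $\mathbb F_G$, and for $H\le G$, $\mathbb F_H$ denotes finite $H$-sets, $*_H$ the one-point $H$-set, $\emptyset_H$ the empty one. A (unital) $G$-weak indexing system is an assignment $H\mapsto \mathcal C_H\subseteq\mathbb F_H$ of isomorphism-closed classes, stable under restriction to subgroups, such that $*_H\in\mathcal C_H$ for all $H$, $\mathcal C$ is closed under self-indexed coproducts ($S\in\mathcal C_H$ and $T_x\in\mathcal C_{K}$ for each orbit $[H/K]\subseteq S$ imply $\coprod \mathrm{Ind}_K^HT_x\in\mathcal C_H$), and $S\sqcup S'\in\mathcal C_H$ implies $S,S'\in\mathcal C_H$. $\mathrm{wIndSys}^{uni}_G$ is the poset of these under inclusion. A $G$-family is a set of subgroups closed under passage to subgroups; $\mathrm{Fam}_G$ is their poset ($\cong[n+2]$, a total order with $n+2$ elements). A $G$-transfer system is a partial order $R$ on subgroups refining inclusion (pairs $K\subseteq H$), reflexive, transitive, and closed under restriction: $(K\subseteq H)\in R$ and $L\le H$ imply $(K\cap L\subseteq L)\in R$; $\mathrm{Transf}_G$ is their poset under inclusion ($\cong$ the associahedron $K_{n+2}$), and $R^{\simeq}$ denotes the identity pairs $H\subseteq H$. $\mathfrak R(\mathcal C)=\{K\subseteq H\mid [H/K]\in\mathcal C_H\}$ and $\nabla(\mathcal C)=\{H\mid 2\cdot *_H\in\mathcal C_H\}$. $\mathrm{Domain}(R)=\{L\mid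 L\le K\text{ for some }(K\subsetneq H)\in R\}$ and $\mathrm{Codomain}(R)=\{L\mid L\le H\text{ for some }(K\subsetneq H)\in R\}$. For a set $\mathcal C$ of subgroups, $\mathrm{Sieve}_R(\mathcal C)$ is the poset (under inclusion) of sets $\mathfrak S\subseteq R$ of pairs such that: (b) if $(K\subseteq H)\in\mathfrak S$ and $L\le H$ with $L\in\mathcal C$ then $(L\cap K\subseteq L)\in\mathfrak S$; (c) if $(K\subseteq H)\in\mathfrak S$ then $H\in\mathcal C$; (d) if $(J\subseteq K)\in R$ and $(K\subsetneq H)\in\mathfrak S$ then $(J\subseteq H)\in\mathfrak S$. A monotone map $\pi:P\to Q$ is a cocartesian fibration if for all $q\le q'$ and $x\in\pi^{-1}(q)$ there is $t_q^{q'}x\in\pi^{-1}(q')$ with: for all $y$ with $q'\le\pi(y)$, $x\le y\iff t_q^{q'}x\le y$; the map $t_q^{q'}$ is called cocartesian transport. *)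

theory Defs
  imports Main "HOL-Library.Multiset" "HOL-Computational_Algebra.Primes"
begin

text \<open>G = C_{p^n}. The subgroup C_{p^k} (0 <= k <= n) is encoded by the natural number k;
 inclusion of subgroups is <=, intersection is min.
 A finite H-set for H = C_{p^h}, up to isomorphism, is encoded as the multiset of the
 orbit types of its orbits: the number k (k <= h) stands for an orbit H/C_{p^k}.
 Thus the one-point H-set is {#h#}, the orbit [H/K] for K = C_{p^k} is {#k#}, 2*H is {#h,h#},
 disjoint union is multiset sum and induction Ind_K^H leaves the multiset unchanged.\<close>

definition hset :: "nat \<Rightarrow> nat multiset set" where
  "hset h = {S. set_mset S \<subseteq> {..h}}"

text \<open>Restriction from C_{p^h} to C_{p^l}: the orbit C_{p^h}/C_{p^k} restricts to
 p^(h - max l k) copies of the orbit C_{p^l}/C_{p^(min l k)}.\<close>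
definition res :: "nat \<Rightarrow> nat \<Rightarrow> nat \<Rightarrow> nat multiset \<Rightarrow> nat multiset" where
  "res p h l S = sum_mset (image_mset (\<lambda>k. replicate_mset (p ^ (h - max l k)) (min l k)) S)"

definition ind :: "nat multiset \<Rightarrow> nat multiset" where
  "ind T = T"

definition wIndSys :: "nat \<Rightarrow> nat \<Rightarrow> (nat \<Rightarrow> nat multiset set) set" where
  "wIndSys p n = {C.
     (\<forall>h. n < h \<longrightarrow> C h = {}) \<and>
     (\<forall>h\<le>n. C h \<subseteq> hset h) \<and>
     (\<forall>h l S. h \<le> n \<longrightarrow> l \<le> h \<longrightarrow> S \<in> C h \<longrightarrow> res p h l S \<in> C l) \<and>
     (\<forall>h\<le>n. {#h#} \<in> C h) \<and>
     (\<forall>h xs. h \<le> n \<longrightarrow> mset (map fst xs) \<in> C h \<longrightarrow> (\<forall>(k, T)\<in>set xs. T \<in> C k)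
          \<longrightarrow> sum_list (map (\<lambda>(k, T). ind T) xs) \<in> C h) \<and>
     (\<forall>h S S'. h \<le> n \<longrightarrow> S + S' \<in> C h \<longrightarrow> S \<in> C h \<and> S' \<in> C h)}"

text \<open>Transfer systems: a pair (k,h) means C_{p^k} \<subseteq> C_{p^h}.\<close>
definition idR :: "nat \<Rightarrow> (nat \<times> nat) set" where
  "idR n = {(h, h) | h. h \<le> n}"

definition transf :: "nat \<Rightarrow> (nat \<times> nat) set set" where
  "transf n = {R. R \<subseteq> {(k, h). k \<le> h \<and> h \<le> n} \<and> idR n \<subseteq> R \<and> trans R \<and>
     (\<forall>k h l. (k, h) \<in> R \<longrightarrow> l \<le> h \<longrightarrow> (min k l, l) \<in> R)}"

definition fam :: "nat \<Rightarrow> nat set set" where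
  "fam n = {F. F \<subseteq> {..n} \<and> (\<forall>h\<in>F. \<forall>k\<le>h. k \<in> F)}"

definition frakR :: "nat \<Rightarrow> (nat \<Rightarrow> nat multiset set) \<Rightarrow> (nat \<times> nat) set" where
  "frakR n C = {(k, h). k \<le> h \<and> h \<le> n \<and> {#k#} \<in> C h}"

definition nabla :: "nat \<Rightarrow> (nat \<Rightarrow> nat multiset set) \<Rightarrow> nat set" where
  "nabla n C = {h. h \<le> n \<and> {#h, h#} \<in> C h}"

definition Domain_tr :: "(nat \<times> nat) set \<Rightarrow> nat set" where
  "Domain_tr R = {l. \<exists>k h. (k, h) \<in> R \<and> k < h \<and> l \<le> k}"

definition Codomain_tr :: "(nat \<times> nat) set \<Rightarrow> nat set" where
  "Codomain_tr R = {l. \<exists>k h. (k, h) \<in> R \<and> k < h \<and> l \<le> h}"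

text \<open>Sieves (they contain R^\<simeq>, condition (c) concerns proper pairs).\<close>
definition Sieve :: "nat \<Rightarrow> (nat \<times> nat) set \<Rightarrow> nat set \<Rightarrow> (nat \<times> nat) set set" where
  "Sieve n R \<C> = {S. idR n \<subseteq> S \<and> S \<subseteq> R \<and>
     (\<forall>k h l. (k, h) \<in> S \<longrightarrow> l \<le> h \<longrightarrow> l \<in> \<C> \<longrightarrow> (min l k, l) \<in> S) \<and>
     (\<forall>k h. (k, h) \<in> S \<longrightarrow> k < h \<longrightarrow> h \<in> \<C>) \<and>
     (\<forall>j k h. (j, k) \<in> R \<longrightarrow> (k, h) \<in> S \<longrightarrow> k < h \<longrightarrow> (j, h) \<in> S)}"

definition transportR :: "nat \<Rightarrow> (nat \<times> nat) set \<Rightarrow> (nat \<times> nat) set \<Rightarrow> (nat \<times> nat) set" where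
  "transportR n R' S = idR n \<union> {(j, h). \<exists>k. j \<le> k \<and> k < h \<and> (j, k) \<in> R' \<and> (k, h) \<in> S}"

definition restrictS :: "nat \<Rightarrow> nat set \<Rightarrow> (nat \<times> nat) set \<Rightarrow> (nat \<times> nat) set" where
  "restrictS n \<C>' S = idR n \<union> {(k, h). (k, h) \<in> S \<and> h \<in> \<C>'}"

definition fib :: "nat \<Rightarrow> nat \<Rightarrow> (nat \<times> nat) set \<Rightarrow> nat set \<Rightarrow> (nat \<Rightarrow> nat multiset set) set" where
  "fib p n R F = {C \<in> wIndSys p n. frakR n C = R \<and> nabla n C = F}"

definition leTF :: "(nat \<times> nat) set \<times> nat set \<Rightarrow> (nat \<times> nat) set \<times> nat set \<Rightarrow> bool" where
  "leTF a b \<longleftrightarrow> fst a \<subseteq> fst b \<and> snd a \<subseteq> snd b"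

definition cocart_lift :: "'a set \<Rightarrow> ('a \<Rightarrow> 'a \<Rightarrow> bool) \<Rightarrow> ('b \<Rightarrow> 'b \<Rightarrow> bool) \<Rightarrow> ('a \<Rightarrow> 'b)
     \<Rightarrow> 'a \<Rightarrow> 'b \<Rightarrow> 'a \<Rightarrow> bool" where
  "cocart_lift P leP leQ \<pi> x q' t \<longleftrightarrow> t \<in> P \<and> \<pi> t = q' \<and>
     (\<forall>y\<in>P. leQ q' (\<pi> y) \<longrightarrow> (leP x y \<longleftrightarrow> leP t y))"

definition cocart_fib :: "'a set \<Rightarrow> ('a \<Rightarrow> 'a \<Rightarrow> bool) \<Rightarrow> 'b set \<Rightarrow> ('b \<Rightarrow> 'b \<Rightarrow> bool) \<Rightarrow> ('a \<Rightarrow> 'b) \<Rightarrow> bool" where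
  "cocart_fib P leP Q leQ \<pi> \<longleftrightarrow> (\<forall>x\<in>P. \<pi> x \<in> Q) \<and>
     (\<forall>x\<in>P. \<forall>y\<in>P. leP x y \<longrightarrow> leQ (\<pi> x) (\<pi> y)) \<and>
     (\<forall>q\<in>Q. \<forall>q'\<in>Q. leQ q q' \<longrightarrow> (\<forall>x\<in>P. \<pi> x = q \<longrightarrow> (\<exists>t. cocart_lift P leP leQ \<pi> x q' t)))"

end

theory Submission
  imports Defs
begin


lemma res_empty[simp]: "res p h l {#} = {#}" by (simp add: res_def)
lemma res_add[simp]: "res p h l (add_mset k M) = replicate_mset (p ^ (h - max l k)) (min l k) + res p h l M"
  by (simp add: res_def)

lemma in_res: assumes "p > 0" shows "j \<in># res p h l M \<longleftrightarrow> (\<exists>k\<in>#M. j = min l k)"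
  using assms by (induction M) auto

lemma count_res_l: assumes "l \<le> h" "\<forall>k\<in>#M. l \<le> k \<longrightarrow> k = h"
  shows "count (res p h l M) l = count M h"
  using assms(2) proof (induction M)
  case empty then show ?case by simp
next
  case (add x M)
  then have IH: "count (res p h l M) l = count M h" by simp
  show ?case
  proof (cases "l \<le> x")
    case True
    then have "x = h" using add.prems by simp
    then have "max l x = h" "min l x = l" using assms(1) by auto
    then show ?thesis using IH \<open>x = h\<close> by simp
  next
    case False
    then have "min l x = x" "x \<noteq> l" "x \<noteq> h" using assms(1) by auto
    then show ?thesis using IH by simp
  qed
qed

lemma rep_one: "1 \<le> m \<Longrightarrow> {#x#} \<subseteq># replicate_mset m x"
  by (cases m) auto
lemma rep_two: "2 \<le> m \<Longrightarrow> {#x, x#} \<subseteq># replicate_mset m x"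
  by (cases m; cases "m - 1") auto

abbreviation (input) W where "W p n \<equiv> wIndSys p n"

lemma WD_all: "C \<in> wIndSys p n \<Longrightarrow> (\<forall>h. n < h \<longrightarrow> C h = {}) \<and>
     (\<forall>h\<le>n. C h \<subseteq> hset h) \<and>
     (\<forall>h l S. h \<le> n \<longrightarrow> l \<le> h \<longrightarrow> S \<in> C h \<longrightarrow> res p h l S \<in> C l) \<and>
     (\<forall>h\<le>n. {#h#} \<in> C h) \<and>
     (\<forall>h xs. h \<le> n \<longrightarrow> mset (map fst xs) \<in> C h \<longrightarrow> (\<forall>(k, T)\<in>set xs. T \<in> C k)
          \<longrightarrow> sum_list (map (\<lambda>(k, T). ind T) xs) \<in> C h) \<and>
     (\<forall>h S S'. h \<le> n \<longrightarrow> S + S' \<in> C h \<longrightarrow> S \<in> C h \<and> S' \<in> C h)"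
  unfolding wIndSys_def mem_Collect_eq .

lemma W_empty: "C \<in> wIndSys p n \<Longrightarrow> n < h \<Longrightarrow> C h = {}"
  using WD_all[THEN conjunct1] by simp
lemma W_le: "C \<in> wIndSys p n \<Longrightarrow> M \<in> C h \<Longrightarrow> h \<le> n"
  by (metis W_empty empty_iff not_le)
lemma W_hset: assumes "C \<in> wIndSys p n" "M \<in> C h" "k \<in># M" shows "k \<le> h"
proof -
  have "h \<le> n" using W_le assms by blast
  then have "C h \<subseteq> hset h" using WD_all[OF assms(1), THEN conjunct2, THEN conjunct1] by simp
  then show ?thesis using assms(2,3) unfolding hset_def by auto
qed
lemma W_res: assumes "C \<in> wIndSys p n" "M \<in> C h" "l \<le> h" shows "res p h l M \<in> C l"
proof -
  have "h \<le> n" using W_le assms by blast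
  then show ?thesis using WD_all[OF assms(1), THEN conjunct2, THEN conjunct2, THEN conjunct1] assms(2,3) by simp
qed
lemma W_one: "C \<in> wIndSys p n \<Longrightarrow> h \<le> n \<Longrightarrow> {#h#} \<in> C h"
  using WD_all[THEN conjunct2, THEN conjunct2, THEN conjunct2, THEN conjunct1] by simp
lemma W_coprod: assumes "C \<in> wIndSys p n" "h \<le> n" "mset (map fst xs) \<in> C h"
  "\<forall>(k, T)\<in>set xs. T \<in> C k"
  shows "sum_list (map snd xs) \<in> C h"
proof -
  have A: "\<forall>h xs. h \<le> n \<longrightarrow> mset (map fst xs) \<in> C h \<longrightarrow> (\<forall>(k, T)\<in>set xs. T \<in> C k)
          \<longrightarrow> sum_list (map (\<lambda>(k, T). ind T) xs) \<in> C h"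
    using WD_all[OF assms(1), THEN conjunct2, THEN conjunct2, THEN conjunct2, THEN conjunct2, THEN conjunct1] .
  have "sum_list (map (\<lambda>(k, T). ind T) xs) \<in> C h"
    using A[rule_format, OF assms(2,3)] assms(4) by fast
  moreover have "map (\<lambda>(k, T). ind T) xs = map snd xs" by (auto simp: ind_def)
  ultimately show ?thesis by simp
qed
lemma W_summand: assumes "C \<in> wIndSys p n" "M + N \<in> C h" shows "M \<in> C h \<and> N \<in> C h"
proof -
  have "h \<le> n" using W_le assms by blast
  then show ?thesis using WD_all[OF assms(1), THEN conjunct2, THEN conjunct2, THEN conjunct2, THEN conjunct2, THEN conjunct2] assms(2) by blast
qed
lemma W_sub: assumes "C \<in> wIndSys p n" "N \<in> C h" "M \<subseteq># N" shows "M \<in> C h"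
proof -
  have "N = M + (N - M)" using assms(3) by simp
  then show ?thesis using W_summand[OF assms(1)] assms(2) by metis
qed
lemma W_elem: "C \<in> wIndSys p n \<Longrightarrow> M \<in> C h \<Longrightarrow> k \<in># M \<Longrightarrow> {#k#} \<in> C h"
  using W_sub by (metis single_subset_iff)
lemma W_emp: "C \<in> wIndSys p n \<Longrightarrow> h \<le> n \<Longrightarrow> {#} \<in> C h"
  using W_sub W_one by (metis empty_le)
lemma W_sum: assumes "C \<in> wIndSys p n" "{#h,h#} \<in> C h" "M \<in> C h" "N \<in> C h"
  shows "M + N \<in> C h"
  using W_coprod[OF assms(1) W_le[OF assms(1,2)], of "[(h,M),(h,N)]"] assms by simp
lemma W_all: assumes "C \<in> wIndSys p n" "{#h,h#} \<in> C h" "\<forall>k\<in>#M. {#k#} \<in> C h"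
  shows "M \<in> C h"
  using assms(3) proof (induction M)
  case empty then show ?case using W_emp[OF assms(1) W_le[OF assms(1,2)]] by simp
next
  case (add x M)
  then have "{#x#} + M \<in> C h" using W_sum[OF assms(1,2), of "{#x#}" M] by simp
  then show ?case by simp
qed
lemma W_resone: assumes "C \<in> wIndSys p n" "p > 0" "{#k#} \<in> C h" "l \<le> h"
  shows "{#min l k#} \<in> C l"
proof -
  have "res p h l {#k#} \<in> C l" using W_res assms by blast
  moreover have "{#min l k#} \<subseteq># res p h l {#k#}" using assms(2) by (simp add: rep_one)
  ultimately show ?thesis using W_sub assms(1) by blast
qed
lemma W_dom: assumes "C \<in> wIndSys p n" "prime p" "{#k#} \<in> C h" "k < h"
  shows "{#k,k#} \<in> C k"
proof -
  have r: "res p h k {#k#} \<in> C k" using W_res[OF assms(1,3) less_imp_le[OF assms(4)]] .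
  have "2 \<le> p ^ (h - k)"
  proof -
    have p2: "2 \<le> p" using prime_ge_2_nat[OF assms(2)] .
    have "1 \<le> h - k" using assms(4) by simp
    then have "p ^ 1 \<le> p ^ (h - k)" using p2 by (intro power_increasing) simp_all
    then show ?thesis using p2 by simp
  qed
  then have "{#k,k#} \<subseteq># replicate_mset (p ^ (h - k)) k" by (rule rep_two)
  moreover have "res p h k {#k#} = replicate_mset (p ^ (h - k)) k" by simp
  ultimately have "{#k,k#} \<subseteq># res p h k {#k#}" by simp
  then show ?thesis using W_sub[OF assms(1) r] by blast
qed
lemma W_fam: assumes "C \<in> wIndSys p n" "{#h,h#} \<in> C h" "k \<le> h" shows "{#k,k#} \<in> C k"
proof -
  have "res p h k {#h,h#} \<in> C k" using W_res[OF assms(1,2,3)] .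
  moreover have "max k h = h" "min k h = k" using assms(3) by auto
  ultimately show ?thesis by simp
qed
lemma W_trans: assumes "C \<in> wIndSys p n" "{#j#} \<in> C k" "{#k#} \<in> C h" shows "{#j#} \<in> C h"
  using W_coprod[OF assms(1) W_le[OF assms(1,3)], of "[(k,{#j#})]"] assms by simp
lemma W_G8: assumes "C \<in> wIndSys p n" "{#h,k#} \<in> C h" "{#j#} \<in> C k" shows "{#h,j#} \<in> C h"
proof -
  have "sum_list (map snd [(h,{#h#}),(k,{#j#})]) \<in> C h"
    using W_coprod[OF assms(1) W_le[OF assms(1,2)], of "[(h,{#h#}),(k,{#j#})]"] assms
    W_one[OF assms(1) W_le[OF assms(1,2)]] by simp
  moreover have "sum_list (map snd [(h,{#h#}),(k,{#j#})]) = {#j,h#}" by simp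
  ultimately show ?thesis by (metis add_mset_commute)
qed



lemma frakR_iff: "(k, h) \<in> frakR n C \<longleftrightarrow> k \<le> h \<and> h \<le> n \<and> {#k#} \<in> C h"
  by (simp add: frakR_def)
lemma nabla_iff: "h \<in> nabla n C \<longleftrightarrow> h \<le> n \<and> {#h, h#} \<in> C h"
  by (simp add: nabla_def)
lemma idR_iff: "(a, b) \<in> idR n \<longleftrightarrow> a = b \<and> b \<le> n"
  by (auto simp: idR_def)

lemma two_sub: "2 \<le> count M x \<Longrightarrow> {#x, x#} \<subseteq># M"
  by (metis count_le_replicate_mset_subset_eq numeral_2_eq_2 replicate_mset_0 replicate_mset_Suc)
lemma pair_sub: "h \<in># M \<Longrightarrow> k \<in># M \<Longrightarrow> h \<noteq> k \<Longrightarrow> {#h, k#} \<subseteq># M"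
  by (metis insert_noteq_member mset_add mset_subset_eq_add_mset_cancel single_subset_iff)

lemma W_below: assumes "C \<in> wIndSys p n" "prime p" "{#k0#} \<in> C h" "k0 < h"
  "\<forall>k\<in>#M. k \<le> k0 \<and> {#k#} \<in> C h"
  shows "M \<in> C k0"
proof -
  have p0: "p > 0" using assms(2) prime_gt_0_nat by blast
  have 1: "{#k0,k0#} \<in> C k0" using W_dom assms by blast
  have "\<forall>k\<in>#M. {#k#} \<in> C k0"
  proof
    fix k assume "k \<in># M"
    then have "{#min k0 k#} \<in> C k0" using W_resone[OF assms(1) p0, of k h k0] assms by auto
    moreover have "min k0 k = k" using \<open>k \<in># M\<close> assms(5) by auto
    ultimately show "{#k#} \<in> C k0" by simp
  qed
  then show ?thesis using W_all[OF assms(1) 1] by blast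
qed

lemma W_A: assumes "C \<in> wIndSys p n" "prime p" "h \<le> n" "\<forall>k\<in>#M. k < h \<and> {#k#} \<in> C h"
  shows "M \<in> C h"
proof (cases "M = {#}")
  case True then show ?thesis using W_emp assms by blast
next
  case False
  define k0 where "k0 = Max (set_mset M)"
  have k0in: "k0 \<in># M" using False unfolding k0_def by (simp add: Max_in)
  have k0ge: "\<forall>k\<in>#M. k \<le> k0" unfolding k0_def by simp
  have "{#k0#} \<in> C h" "k0 < h" using k0in assms(4) by auto
  moreover have "\<forall>k\<in>#M. k \<le> k0 \<and> {#k#} \<in> C h" using k0ge assms(4) by auto
  ultimately have "M \<in> C k0" using W_below assms(1,2) by blast
  then show ?thesis
    using W_coprod[OF assms(1,3), of "[(k0, M)]"] \<open>{#k0#} \<in> C h\<close> by simp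
qed

lemma W_B: assumes "C \<in> wIndSys p n" "prime p" "h \<le> n" "\<forall>k\<in>#M. k < h \<and> {#h, k#} \<in> C h"
  shows "add_mset h M \<in> C h"
proof (cases "M = {#}")
  case True then show ?thesis using W_one assms by simp
next
  case False
  define k0 where "k0 = Max (set_mset M)"
  have k0in: "k0 \<in># M" using False unfolding k0_def by (simp add: Max_in)
  have k0ge: "\<forall>k\<in>#M. k \<le> k0" unfolding k0_def by simp
  have hk0: "{#h, k0#} \<in> C h" "k0 < h" using k0in assms(4) by auto
  have "{#k0#} \<in> C h" using W_elem[OF assms(1) hk0(1)] by simp
  moreover have "\<forall>k\<in>#M. k \<le> k0 \<and> {#k#} \<in> C h" using k0ge assms(4) W_elem[OF assms(1)] by fastforce
  ultimately have "M \<in> C k0" using W_below assms(1,2) hk0(2) by blast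
  then show ?thesis
    using W_coprod[OF assms(1,3), of "[(h, {#h#}), (k0, M)]"] hk0 W_one[OF assms(1,3)] by simp
qed

lemma frakR_transf: assumes "C \<in> wIndSys p n" "p > 0" shows "frakR n C \<in> transf n"
  unfolding transf_def
proof (intro CollectI conjI)
  show "frakR n C \<subseteq> {(k, h). k \<le> h \<and> h \<le> n}" by (auto simp: frakR_def)
  show "idR n \<subseteq> frakR n C" using W_one[OF assms(1)] by (auto simp: idR_def frakR_def)
  show "trans (frakR n C)"
    by (rule transI) (auto simp: frakR_iff intro: W_trans[OF assms(1)])
  show "\<forall>k h l. (k, h) \<in> frakR n C \<longrightarrow> l \<le> h \<longrightarrow> (min k l, l) \<in> frakR n C"
    using W_resone[OF assms] by (auto simp: frakR_iff min.commute)
qed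

lemma nabla_fam: assumes "C \<in> wIndSys p n" shows "nabla n C \<in> fam n"
  unfolding fam_def using W_fam[OF assms] by (auto simp: nabla_iff)

lemma W_domF: assumes "C \<in> wIndSys p n" "prime p" shows "Domain_tr (frakR n C) \<subseteq> nabla n C"
proof
  fix l assume "l \<in> Domain_tr (frakR n C)"
  then obtain k h where "(k, h) \<in> frakR n C" "k < h" "l \<le> k" by (auto simp: Domain_tr_def)
  then have "{#k,k#} \<in> C k" using W_dom[OF assms] by (auto simp: frakR_iff)
  then have "{#l,l#} \<in> C l" using W_fam[OF assms(1)] \<open>l \<le> k\<close> by blast
  then show "l \<in> nabla n C" using W_le[OF assms(1)] by (auto simp: nabla_iff)
qed



definition PhiS :: "nat \<Rightarrow> nat set \<Rightarrow> (nat \<Rightarrow> nat multiset set) \<Rightarrow> (nat \<times> nat) set" where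
  "PhiS n F C = idR n \<union> {(k, h). k < h \<and> h \<notin> F \<and> {#h, k#} \<in> C h}"

definition Cof :: "nat \<Rightarrow> (nat \<times> nat) set \<Rightarrow> nat set \<Rightarrow> (nat \<times> nat) set \<Rightarrow> nat \<Rightarrow> nat multiset set" where
  "Cof n R F S h = (if n < h then {} else if h \<in> F then {M. \<forall>k\<in>#M. (k, h) \<in> R}
     else {M. (\<forall>k\<in>#M. (k, h) \<in> R) \<and> count M h \<le> 1 \<and> (h \<in># M \<longrightarrow> (\<forall>k\<in>#M. (k, h) \<in> S))})"

lemma C_eq_Cof: assumes "C \<in> wIndSys p n" "prime p"
  shows "C h = Cof n (frakR n C) (nabla n C) (PhiS n (nabla n C) C) h"
proof (cases "n < h")
  case True then show ?thesis using W_empty[OF assms(1)] by (simp add: Cof_def)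
next
  case False
  then have hn: "h \<le> n" by simp
  show ?thesis
  proof (cases "h \<in> nabla n C")
    case True
    then have hh: "{#h,h#} \<in> C h" by (simp add: nabla_iff)
    show ?thesis
    proof (rule set_eqI)
      fix M
      have cof: "M \<in> Cof n (frakR n C) (nabla n C) (PhiS n (nabla n C) C) h \<longleftrightarrow>
          (\<forall>k\<in>#M. (k, h) \<in> frakR n C)" using True hn by (simp add: Cof_def)
      show "M \<in> C h \<longleftrightarrow> M \<in> Cof n (frakR n C) (nabla n C) (PhiS n (nabla n C) C) h"
      proof
        assume M: "M \<in> C h"
        have "\<forall>k\<in>#M. (k, h) \<in> frakR n C"
        proof
          fix k assume "k \<in># M"
          then show "(k, h) \<in> frakR n C" using W_elem[OF assms(1) M] W_hset[OF assms(1) M] hn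
            by (simp add: frakR_iff)
        qed
        then show "M \<in> Cof n (frakR n C) (nabla n C) (PhiS n (nabla n C) C) h" using cof by simp
      next
        assume "M \<in> Cof n (frakR n C) (nabla n C) (PhiS n (nabla n C) C) h"
        then have "\<forall>k\<in>#M. (k, h) \<in> frakR n C" using cof by simp
        then have "\<forall>k\<in>#M. {#k#} \<in> C h" by (simp add: frakR_iff)
        then show "M \<in> C h" using W_all[OF assms(1) hh] by blast
      qed
    qed
  next
    case False
    then have nh: "{#h,h#} \<notin> C h" using hn by (simp add: nabla_iff)
    show ?thesis
    proof (rule set_eqI)
      fix M
      show "M \<in> C h \<longleftrightarrow> M \<in> Cof n (frakR n C) (nabla n C) (PhiS n (nabla n C) C) h"
      proof
        assume M: "M \<in> C h"
        have a: "\<forall>k\<in>#M. (k, h) \<in> frakR n C"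
        proof
          fix k assume "k \<in># M"
          then show "(k, h) \<in> frakR n C" using W_elem[OF assms(1) M] W_hset[OF assms(1) M] hn
            by (simp add: frakR_iff)
        qed
        have b: "count M h \<le> 1"
        proof (rule ccontr)
          assume "\<not> count M h \<le> 1"
          then have "2 \<le> count M h" by linarith
          then have "{#h,h#} \<subseteq># M" by (rule two_sub)
          then show False using W_sub[OF assms(1) M] nh by simp
        qed
        have c: "h \<in># M \<longrightarrow> (\<forall>k\<in>#M. (k, h) \<in> PhiS n (nabla n C) C)"
        proof (intro impI ballI)
          fix k assume hM: "h \<in># M" and kM: "k \<in># M"
          show "(k, h) \<in> PhiS n (nabla n C) C"
          proof (cases "k = h")
            case True then show ?thesis using hn by (simp add: PhiS_def idR_iff)
          next
            case False
            then have "k < h" using W_hset[OF assms(1) M kM] by simp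
            moreover have "{#h,k#} \<in> C h" using W_sub[OF assms(1) M pair_sub[OF hM kM]] False by simp
            ultimately show ?thesis using \<open>h \<notin> nabla n C\<close> by (simp add: PhiS_def)
          qed
        qed
        show "M \<in> Cof n (frakR n C) (nabla n C) (PhiS n (nabla n C) C) h"
          using a b c hn \<open>h \<notin> nabla n C\<close> by (simp add: Cof_def)
      next
        assume "M \<in> Cof n (frakR n C) (nabla n C) (PhiS n (nabla n C) C) h"
        then have a: "\<forall>k\<in>#M. (k, h) \<in> frakR n C" and b: "count M h \<le> 1"
          and c: "h \<in># M \<longrightarrow> (\<forall>k\<in>#M. (k, h) \<in> PhiS n (nabla n C) C)"
          using hn \<open>h \<notin> nabla n C\<close> by (simp_all add: Cof_def)
        show "M \<in> C h"
        proof (cases "h \<in># M")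
          case False
          have "\<forall>k\<in>#M. k < h \<and> {#k#} \<in> C h"
          proof
            fix k assume "k \<in># M"
            then have "(k, h) \<in> frakR n C" "k \<noteq> h" using a False by auto
            then show "k < h \<and> {#k#} \<in> C h" by (simp add: frakR_iff)
          qed
          then show ?thesis using W_A[OF assms hn] by blast
        next
          case True
          define M' where "M' = M - {#h#}"
          have MM: "M = add_mset h M'" using True unfolding M'_def by simp
          have "count M' h = 0" using b True unfolding M'_def by simp
          then have "h \<notin># M'" by (simp add: not_in_iff)
          have "\<forall>k\<in>#M'. k < h \<and> {#h, k#} \<in> C h"
          proof
            fix k assume kM: "k \<in># M'"
            then have "k \<noteq> h" using \<open>h \<notin># M'\<close> by blast
            moreover have "(k, h) \<in> PhiS n (nabla n C) C" using c True kM MM by auto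
            ultimately show "k < h \<and> {#h, k#} \<in> C h" by (auto simp: PhiS_def idR_iff)
          qed
          then have "add_mset h M' \<in> C h" by (rule W_B[OF assms hn])
          then show ?thesis unfolding MM[symmetric] .
        qed
      qed
    qed
  qed
qed



lemma SieveI: "idR n \<subseteq> S \<Longrightarrow> S \<subseteq> R \<Longrightarrow>
     (\<forall>k h l. (k, h) \<in> S \<longrightarrow> l \<le> h \<longrightarrow> l \<in> CC \<longrightarrow> (min l k, l) \<in> S) \<Longrightarrow>
     (\<forall>k h. (k, h) \<in> S \<longrightarrow> k < h \<longrightarrow> h \<in> CC) \<Longrightarrow>
     (\<forall>j k h. (j, k) \<in> R \<longrightarrow> (k, h) \<in> S \<longrightarrow> k < h \<longrightarrow> (j, h) \<in> S) \<Longrightarrow> S \<in> Sieve n R CC"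
  unfolding Sieve_def mem_Collect_eq by (intro conjI)

lemma Phi_sieve: assumes "C \<in> wIndSys p n" "prime p"
  shows "PhiS n (nabla n C) C \<in> Sieve n (frakR n C) (Codomain_tr (frakR n C) - nabla n C)"
proof -
  let ?R = "frakR n C" and ?F = "nabla n C" and ?P = "PhiS n (nabla n C) C"
  have p0: "p > 0" using assms(2) prime_gt_0_nat by blast
  have fam: "?F \<in> fam n" using nabla_fam[OF assms(1)] .
  have PR: "?P \<subseteq> ?R"
  proof
    fix x assume "x \<in> ?P"
    then obtain k h where x: "x = (k, h)" and "(k = h \<and> h \<le> n) \<or> (k < h \<and> h \<notin> ?F \<and> {#h, k#} \<in> C h)"
      by (auto simp: PhiS_def idR_def)
    then show "x \<in> ?R"
    proof (elim disjE)
      assume "k = h \<and> h \<le> n" then show ?thesis using x W_one[OF assms(1)] by (auto simp: frakR_iff)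
    next
      assume a: "k < h \<and> h \<notin> ?F \<and> {#h, k#} \<in> C h"
      then have "{#k#} \<in> C h" using W_elem[OF assms(1), of "{#h, k#}" h k] by simp
      then show ?thesis using a x W_le[OF assms(1)] by (auto simp: frakR_iff)
    qed
  qed
  have b: "\<forall>k h l. (k, h) \<in> ?P \<longrightarrow> l \<le> h \<longrightarrow> l \<in> Codomain_tr ?R - ?F \<longrightarrow> (min l k, l) \<in> ?P"
  proof (intro allI impI)
    fix k h l assume kh: "(k, h) \<in> ?P" and lh: "l \<le> h" and l: "l \<in> Codomain_tr ?R - ?F"
    show "(min l k, l) \<in> ?P"
    proof (cases "k = h")
      case True
      then have "h \<le> n" using kh PR by (auto simp: frakR_iff)
      moreover have "min l k = l" using True lh by simp
      ultimately show ?thesis using lh by (simp add: PhiS_def idR_iff)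
    next
      case False
      then have a: "k < h" "h \<notin> ?F" "{#h, k#} \<in> C h" using kh by (auto simp: PhiS_def idR_iff)
      have "(k, h) \<in> ?R" using kh PR by blast
      then have "k \<in> Domain_tr ?R" using a by (auto simp: Domain_tr_def)
      then have kF: "k \<in> ?F" using W_domF[OF assms] by blast
      have kl: "k < l"
      proof (rule ccontr)
        assume "\<not> k < l"
        then have "l \<le> k" by simp
        then have "l \<in> ?F" using kF fam unfolding fam_def by blast
        then show False using l by blast
      qed
      have r: "res p h l {#h, k#} \<in> C l" using W_res[OF assms(1) a(3) lh] .
      have mm: "max l h = h" "min l h = l" "max l k = l" "min l k = k" using kl lh by auto
      have "res p h l {#h, k#} = add_mset l (replicate_mset (p ^ (h - l)) k)"
        by (simp only: res_add res_empty mm) simp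
      moreover have "{#l, k#} \<subseteq># add_mset l (replicate_mset (p ^ (h - l)) k)"
        using rep_one[of "p ^ (h - l)" k] p0 by simp
      ultimately have "{#l, k#} \<in> C l" using W_sub[OF assms(1) r] by metis
      then show ?thesis using kl l mm(4) by (simp add: PhiS_def)
    qed
  qed
  have c: "\<forall>k h. (k, h) \<in> ?P \<longrightarrow> k < h \<longrightarrow> h \<in> Codomain_tr ?R - ?F"
  proof (intro allI impI)
    fix k h assume kh: "(k, h) \<in> ?P" "k < h"
    then have "h \<notin> ?F" by (auto simp: PhiS_def idR_iff)
    moreover have "(k, h) \<in> ?R" using kh PR by blast
    ultimately show "h \<in> Codomain_tr ?R - ?F" using kh by (auto simp: Codomain_tr_def)
  qed
  have d: "\<forall>j k h. (j, k) \<in> ?R \<longrightarrow> (k, h) \<in> ?P \<longrightarrow> k < h \<longrightarrow> (j, h) \<in> ?P"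
  proof (intro allI impI)
    fix j k h assume jk: "(j, k) \<in> ?R" and kh: "(k, h) \<in> ?P" and "k < h"
    then have a: "h \<notin> ?F" "{#h, k#} \<in> C h" by (auto simp: PhiS_def idR_iff)
    have "{#h, j#} \<in> C h" using W_G8[OF assms(1) a(2)] jk by (simp add: frakR_iff)
    moreover have "j < h" using jk \<open>k < h\<close> by (simp add: frakR_iff)
    ultimately show "(j, h) \<in> ?P" using a by (simp add: PhiS_def)
  qed
  have "idR n \<subseteq> ?P" by (simp add: PhiS_def)
  then show ?thesis using PR b c d by (rule SieveI)
qed



lemma WI: "(\<forall>h. n < h \<longrightarrow> C h = {}) \<Longrightarrow>
     (\<forall>h\<le>n. C h \<subseteq> hset h) \<Longrightarrow>
     (\<forall>h l S. h \<le> n \<longrightarrow> l \<le> h \<longrightarrow> S \<in> C h \<longrightarrow> res p h l S \<in> C l) \<Longrightarrow>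
     (\<forall>h\<le>n. {#h#} \<in> C h) \<Longrightarrow>
     (\<forall>h xs. h \<le> n \<longrightarrow> mset (map fst xs) \<in> C h \<longrightarrow> (\<forall>(k, T)\<in>set xs. T \<in> C k)
          \<longrightarrow> sum_list (map (\<lambda>(k, T). ind T) xs) \<in> C h) \<Longrightarrow>
     (\<forall>h S S'. h \<le> n \<longrightarrow> S + S' \<in> C h \<longrightarrow> S \<in> C h \<and> S' \<in> C h) \<Longrightarrow> C \<in> wIndSys p n"
  unfolding wIndSys_def by blast

lemma in_sum_list_snd: "j \<in># sum_list (map snd xs) \<longleftrightarrow> (\<exists>(k, T)\<in>set xs. j \<in># T)"
  by (induction xs) auto
lemma count_sum_list_le: "\<forall>(k, T)\<in>set xs. count T h \<le> (if k = h then 1 else 0) \<Longrightarrow>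
   count (sum_list (map snd xs)) h \<le> count (mset (map fst xs)) h"
  by (induction xs) auto
lemma fst_in: "(k, T) \<in> set xs \<Longrightarrow> k \<in># mset (map fst xs)"
  by force
lemma uniq_fst: "count (mset (map fst xs)) h \<le> 1 \<Longrightarrow> (h, T) \<in> set xs \<Longrightarrow> (h, T') \<in> set xs \<Longrightarrow> T = T'"
proof (induction xs)
  case Nil then show ?case by simp
next
  case (Cons a xs)
  show ?case
  proof (cases "fst a = h")
    case True
    then have c: "count (mset (map fst xs)) h = 0" using Cons.prems(1) by (cases a) auto
    then have "(h, T) \<notin> set xs" "(h, T') \<notin> set xs" using fst_in by (metis count_eq_zero_iff)+
    then show ?thesis using Cons.prems by auto
  next
    case False
    then show ?thesis using Cons by (cases a) auto
  qed
qed

lemma Cof_iff: "M \<in> Cof n R F S h \<longleftrightarrow> h \<le> n \<and> (\<forall>k\<in>#M. (k, h) \<in> R) \<and>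
   (h \<notin> F \<longrightarrow> count M h \<le> 1 \<and> (h \<in># M \<longrightarrow> (\<forall>k\<in>#M. (k, h) \<in> S)))"
  by (auto simp: Cof_def)

lemma SieveD:
  assumes "S \<in> Sieve n R CC"
  shows "idR n \<subseteq> S" "S \<subseteq> R"
    "\<And>k h l. (k, h) \<in> S \<Longrightarrow> l \<le> h \<Longrightarrow> l \<in> CC \<Longrightarrow> (min l k, l) \<in> S"
    "\<And>k h. (k, h) \<in> S \<Longrightarrow> k < h \<Longrightarrow> h \<in> CC"
    "\<And>j k h. (j, k) \<in> R \<Longrightarrow> (k, h) \<in> S \<Longrightarrow> k < h \<Longrightarrow> (j, h) \<in> S"
  using assms unfolding Sieve_def mem_Collect_eq by metis+

lemma transfD:
  assumes "R \<in> transf n"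
  shows "\<And>k h. (k, h) \<in> R \<Longrightarrow> k \<le> h \<and> h \<le> n" "\<And>h. h \<le> n \<Longrightarrow> (h, h) \<in> R"
    "\<And>a b c. (a, b) \<in> R \<Longrightarrow> (b, c) \<in> R \<Longrightarrow> (a, c) \<in> R"
    "\<And>k h l. (k, h) \<in> R \<Longrightarrow> l \<le> h \<Longrightarrow> (min k l, l) \<in> R"
proof -
  have a: "R \<subseteq> {(k, h). k \<le> h \<and> h \<le> n}" "idR n \<subseteq> R" "trans R"
    "\<forall>k h l. (k, h) \<in> R \<longrightarrow> l \<le> h \<longrightarrow> (min k l, l) \<in> R"
    using assms unfolding transf_def mem_Collect_eq by metis+
  show "\<And>k h. (k, h) \<in> R \<Longrightarrow> k \<le> h \<and> h \<le> n" using a(1) by blast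
  show "\<And>h. h \<le> n \<Longrightarrow> (h, h) \<in> R" using a(2) by (auto simp: idR_def)
  show "\<And>a b c. (a, b) \<in> R \<Longrightarrow> (b, c) \<in> R \<Longrightarrow> (a, c) \<in> R" using a(3) by (meson transD)
  show "\<And>k h l. (k, h) \<in> R \<Longrightarrow> l \<le> h \<Longrightarrow> (min k l, l) \<in> R" using a(4) by blast
qed

lemma famD: "F \<in> fam n \<Longrightarrow> h \<in> F \<Longrightarrow> k \<le> h \<Longrightarrow> k \<in> F"
  "F \<in> fam n \<Longrightarrow> h \<in> F \<Longrightarrow> h \<le> n"
  unfolding fam_def by blast+

lemma Cof_W:
  assumes p: "prime p" and R: "R \<in> transf n" and F: "F \<in> fam n" and DF: "Domain_tr R \<subseteq> F"
    and S: "S \<in> Sieve n R (Codomain_tr R - F)"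
  shows "Cof n R F S \<in> wIndSys p n"
proof -
  let ?D = "Cof n R F S"
  have p0: "p > 0" using p prime_gt_0_nat by blast
  note Rle = transfD(1)[OF R] and Rid = transfD(2)[OF R] and Rtr = transfD(3)[OF R]
    and Rres = transfD(4)[OF R] and Fdown = famD(1)[OF F]
  have Sid: "\<And>h. h \<le> n \<Longrightarrow> (h, h) \<in> S" using SieveD(1)[OF S] by (auto simp: idR_def)
  note SR = SieveD(2)[OF S] and Sb = SieveD(3)[OF S] and Sd = SieveD(5)[OF S]
  have domF: "\<And>k h. (k, h) \<in> R \<Longrightarrow> k < h \<Longrightarrow> k \<in> F"
    using DF unfolding Domain_tr_def by blast
  show ?thesis
  proof (rule WI)
    show "\<forall>h. n < h \<longrightarrow> ?D h = {}" by (simp add: Cof_def)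
    show "\<forall>h\<le>n. ?D h \<subseteq> hset h" using Rle by (auto simp: Cof_iff hset_def)
    show "\<forall>h\<le>n. {#h#} \<in> ?D h" using Rid Sid by (auto simp: Cof_iff)
    show "\<forall>h M M'. h \<le> n \<longrightarrow> M + M' \<in> ?D h \<longrightarrow> M \<in> ?D h \<and> M' \<in> ?D h"
      by (auto simp: Cof_iff)
    show "\<forall>h l M. h \<le> n \<longrightarrow> l \<le> h \<longrightarrow> M \<in> ?D h \<longrightarrow> res p h l M \<in> ?D l"
    proof (intro allI impI)
      fix h l M assume hn: "h \<le> n" and lh: "l \<le> h" and M: "M \<in> ?D h"
      have MR: "\<forall>k\<in>#M. (k, h) \<in> R" using M by (simp add: Cof_iff)
      have e1: "\<forall>j\<in>#res p h l M. (j, l) \<in> R"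
      proof
        fix j assume "j \<in># res p h l M"
        then obtain k where "k \<in># M" "j = min l k" using in_res[OF p0] by blast
        then show "(j, l) \<in> R" using Rres[of k h l] MR lh by (simp add: min.commute)
      qed
      show "res p h l M \<in> ?D l"
      proof (cases "l \<in> F")
        case True then show ?thesis using e1 hn lh by (simp add: Cof_iff)
      next
        case False
        then have hF: "h \<notin> F" using Fdown lh by blast
        have key: "\<forall>k\<in>#M. l \<le> k \<longrightarrow> k = h"
        proof (intro ballI impI)
          fix k assume "k \<in># M" "l \<le> k"
          show "k = h"
          proof (rule ccontr)
            assume "k \<noteq> h"
            then have "k < h" using Rle MR \<open>k \<in># M\<close> by (meson le_neq_implies_less)
            then have "k \<in> F" using domF MR \<open>k \<in># M\<close> by blast
            then show False using Fdown \<open>l \<le> k\<close> False by blast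
          qed
        qed
        have cnt: "count (res p h l M) l = count M h" using count_res_l[OF lh key] .
        have c2: "count M h \<le> 1" "h \<in># M \<longrightarrow> (\<forall>k\<in>#M. (k, h) \<in> S)" using M hF by (auto simp: Cof_iff)
        have e3: "l \<in># res p h l M \<longrightarrow> (\<forall>j\<in>#res p h l M. (j, l) \<in> S)"
        proof (intro impI ballI)
          assume "l \<in># res p h l M"
          then have "h \<in># M" using cnt by (metis count_eq_zero_iff)
          then have allS: "\<forall>k\<in>#M. (k, h) \<in> S" using c2 by blast
          fix j assume "j \<in># res p h l M"
          then obtain k where kM: "k \<in># M" and j: "j = min l k" using in_res[OF p0] by blast
          show "(j, l) \<in> S"
          proof (cases "k = h")
            case True then show ?thesis using j lh Sid hn by (simp add: min_absorb1)
          next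
            case False
            then have "k < h" using Rle MR kM by (meson le_neq_implies_less)
            then have "l \<in> Codomain_tr R" using MR kM lh unfolding Codomain_tr_def by blast
            then show ?thesis using Sb[of k h l] allS kM lh False \<open>l \<notin> F\<close> j by blast
          qed
        qed
        show ?thesis using e1 e3 cnt c2(1) hn lh False by (simp add: Cof_iff)
      qed
    qed
    show "\<forall>h xs. h \<le> n \<longrightarrow> mset (map fst xs) \<in> ?D h \<longrightarrow> (\<forall>(k, T)\<in>set xs. T \<in> ?D k)
          \<longrightarrow> sum_list (map (\<lambda>(k, T). ind T) xs) \<in> ?D h"
    proof (intro allI impI)
      fix h xs assume hn: "h \<le> n" and X: "mset (map fst xs) \<in> ?D h"
        and T: "\<forall>(k, T)\<in>set xs. T \<in> ?D k"
      have sl: "map (\<lambda>(k, T). ind T) xs = map snd xs" by (auto simp: ind_def)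
      let ?N = "sum_list (map snd xs)"
      have XR: "\<And>k T. (k, T) \<in> set xs \<Longrightarrow> (k, h) \<in> R"
        using X fst_in by (fastforce simp: Cof_iff)
      have TR: "\<And>k T j. (k, T) \<in> set xs \<Longrightarrow> j \<in># T \<Longrightarrow> (j, k) \<in> R"
        using T by (fastforce simp: Cof_iff)
      have e1: "\<forall>j\<in>#?N. (j, h) \<in> R"
        using XR TR Rtr by (fastforce simp: in_sum_list_snd)
      have "?N \<in> ?D h"
      proof (cases "h \<in> F")
        case True then show ?thesis using e1 hn by (simp add: Cof_iff)
      next
        case False
        have Xc: "count (mset (map fst xs)) h \<le> 1"
          "h \<in># mset (map fst xs) \<longrightarrow> (\<forall>k\<in>#mset (map fst xs). (k, h) \<in> S)"
          using X False by (auto simp: Cof_iff)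
        have tb: "\<forall>(k, T)\<in>set xs. count T h \<le> (if k = h then 1 else 0)"
        proof (intro ballI, clarify)
          fix k T assume kT: "(k, T) \<in> set xs"
          show "count T h \<le> (if k = h then 1 else 0)"
          proof (cases "k = h")
            case True then show ?thesis using T kT False by (auto simp: Cof_iff)
          next
            case False
            then have "k < h" using XR[OF kT] Rle by (meson le_neq_implies_less)
            then have "h \<notin># T" using TR[OF kT] Rle by (meson leD)
            then show ?thesis using False by (simp add: count_eq_zero_iff)
          qed
        qed
        have c1: "count ?N h \<le> 1" using count_sum_list_le[OF tb] Xc(1) by linarith
        have c2: "h \<in># ?N \<longrightarrow> (\<forall>j\<in>#?N. (j, h) \<in> S)"
        proof (intro impI ballI)
          assume "h \<in># ?N"
          then obtain k0 T0 where k0: "(k0, T0) \<in> set xs" "h \<in># T0" by (auto simp: in_sum_list_snd)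
          have "k0 = h" using TR[OF k0] Rle XR[OF k0(1)] by (meson le_antisym)
          then have hX: "h \<in># mset (map fst xs)" using fst_in[OF k0(1)] by simp
          have T0S: "\<forall>j\<in>#T0. (j, h) \<in> S" using T k0 \<open>k0 = h\<close> False by (fastforce simp: Cof_iff)
          fix j assume "j \<in># ?N"
          then obtain k T where kT: "(k, T) \<in> set xs" "j \<in># T" by (auto simp: in_sum_list_snd)
          show "(j, h) \<in> S"
          proof (cases "k = h")
            case True
            then have "T = T0" using uniq_fst[OF Xc(1)] kT(1) k0(1) \<open>k0 = h\<close> by blast
            then show ?thesis using T0S kT by blast
          next
            case False
            then have "k < h" using XR[OF kT(1)] Rle by (meson le_neq_implies_less)
            moreover have "(k, h) \<in> S" using Xc(2) hX fst_in[OF kT(1)] by blast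
            ultimately show ?thesis using Sd TR[OF kT] by blast
          qed
        qed
        show ?thesis using e1 c1 c2 hn False by (simp add: Cof_iff)
      qed
      then show "sum_list (map (\<lambda>(k, T). ind T) xs) \<in> ?D h" unfolding sl .
    qed
  qed
qed



lemma Cof_frakR: assumes R: "R \<in> transf n" and S: "S \<in> Sieve n R CC"
  shows "frakR n (Cof n R F S) = R"
proof (rule set_eqI)
  fix x
  obtain k h :: nat where x: "x = (k, h)" by fastforce
  have Sid: "h \<le> n \<Longrightarrow> (h, h) \<in> S" using SieveD(1)[OF S] by (auto simp: idR_def)
  have "(k, h) \<in> frakR n (Cof n R F S) \<longleftrightarrow> (k, h) \<in> R"
  proof
    assume "(k, h) \<in> frakR n (Cof n R F S)"
    then have "{#k#} \<in> Cof n R F S h" by (simp add: frakR_iff)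
    then show "(k, h) \<in> R" by (simp add: Cof_iff)
  next
    assume a: "(k, h) \<in> R"
    then have kh: "k \<le> h" "h \<le> n" using transfD(1)[OF R] by auto
    have "{#k#} \<in> Cof n R F S h"
      unfolding Cof_iff using a kh Sid by auto
    then show "(k, h) \<in> frakR n (Cof n R F S)" using kh by (simp add: frakR_iff)
  qed
  then show "x \<in> frakR n (Cof n R F S) \<longleftrightarrow> x \<in> R" using x by simp
qed

lemma Cof_nabla: assumes R: "R \<in> transf n" and F: "F \<in> fam n"
  shows "nabla n (Cof n R F S) = F"
proof (rule set_eqI)
  fix h
  show "h \<in> nabla n (Cof n R F S) \<longleftrightarrow> h \<in> F"
  proof
    assume "h \<in> nabla n (Cof n R F S)"
    then have "{#h, h#} \<in> Cof n R F S h" by (simp add: nabla_iff)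
    then show "h \<in> F" unfolding Cof_iff by auto
  next
    assume "h \<in> F"
    then have "h \<le> n" using famD(2)[OF F] by blast
    then have "{#h, h#} \<in> Cof n R F S h" unfolding Cof_iff using transfD(2)[OF R] \<open>h \<in> F\<close> by auto
    then show "h \<in> nabla n (Cof n R F S)" using \<open>h \<le> n\<close> by (simp add: nabla_iff)
  qed
qed

lemma Cof_Phi: assumes R: "R \<in> transf n" and S: "S \<in> Sieve n R (Codomain_tr R - F)"
  shows "PhiS n F (Cof n R F S) = S"
proof (rule set_eqI)
  fix x
  obtain k h :: nat where x: "x = (k, h)" by fastforce
  have Sid: "\<And>h. h \<le> n \<Longrightarrow> (h, h) \<in> S" using SieveD(1)[OF S] by (auto simp: idR_def)
  have SR: "S \<subseteq> R" using SieveD(2)[OF S] .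
  have "(k, h) \<in> PhiS n F (Cof n R F S) \<longleftrightarrow> (k, h) \<in> S"
  proof
    assume "(k, h) \<in> PhiS n F (Cof n R F S)"
    then have "(k = h \<and> h \<le> n) \<or> (k < h \<and> h \<notin> F \<and> {#h, k#} \<in> Cof n R F S h)"
      by (auto simp: PhiS_def idR_iff)
    then show "(k, h) \<in> S"
    proof
      assume "k = h \<and> h \<le> n" then show ?thesis using Sid by blast
    next
      assume a: "k < h \<and> h \<notin> F \<and> {#h, k#} \<in> Cof n R F S h"
      then have "\<forall>j\<in>#{#h, k#}. (j, h) \<in> S" unfolding Cof_iff by auto
      then show ?thesis by simp
    qed
  next
    assume a: "(k, h) \<in> S"
    then have kh: "k \<le> h" "h \<le> n" using transfD(1)[OF R] SR by auto
    show "(k, h) \<in> PhiS n F (Cof n R F S)"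
    proof (cases "k = h")
      case True then show ?thesis using kh by (simp add: PhiS_def idR_iff)
    next
      case False
      then have lt: "k < h" using kh by simp
      then have hF: "h \<notin> F" using SieveD(4)[OF S a] by blast
      have "(h, h) \<in> R" "(k, h) \<in> R" using transfD(2)[OF R] kh a SR by auto
      then have "{#h, k#} \<in> Cof n R F S h" unfolding Cof_iff using kh hF a Sid False by auto
      then show ?thesis using lt hF by (simp add: PhiS_def)
    qed
  qed
  then show "x \<in> PhiS n F (Cof n R F S) \<longleftrightarrow> x \<in> S" using x by simp
qed

lemma Cof_mono: assumes "S \<subseteq> S'" shows "Cof n R F S \<le> Cof n R F S'"
proof (rule le_funI, rule subsetI)
  fix h M assume "M \<in> Cof n R F S h"
  then show "M \<in> Cof n R F S' h" using assms unfolding Cof_iff by blast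
qed

lemma fib_Cof: assumes "prime p" "R \<in> transf n" "F \<in> fam n" "Domain_tr R \<subseteq> F"
  "S \<in> Sieve n R (Codomain_tr R - F)"
  shows "Cof n R F S \<in> fib p n R F"
  unfolding fib_def using Cof_W[OF assms] Cof_frakR[OF assms(2,5)] Cof_nabla[OF assms(2,3)] by simp

lemma fib_W: "C \<in> fib p n R F \<Longrightarrow> C \<in> wIndSys p n \<and> frakR n C = R \<and> nabla n C = F"
  unfolding fib_def by simp

lemma fib_eq: assumes "prime p" "C \<in> fib p n R F" shows "C = Cof n R F (PhiS n F C)"
proof
  fix h show "C h = Cof n R F (PhiS n F C) h"
    using C_eq_Cof[OF fib_W[OF assms(2), THEN conjunct1] assms(1)] fib_W[OF assms(2)] by simp
qed

lemma fib_Phi: assumes "prime p" "C \<in> fib p n R F" shows "PhiS n F C \<in> Sieve n R (Codomain_tr R - F)"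
  using Phi_sieve[OF fib_W[OF assms(2), THEN conjunct1] assms(1)] fib_W[OF assms(2)] by simp

lemma fib_transf: assumes "prime p" "C \<in> fib p n R F"
  shows "R \<in> transf n" "F \<in> fam n" "Domain_tr R \<subseteq> F"
proof -
  have W: "C \<in> wIndSys p n" and e: "frakR n C = R" "nabla n C = F" using fib_W[OF assms(2)] by auto
  have "p > 0" using assms(1) prime_gt_0_nat by blast
  show "R \<in> transf n" using frakR_transf[OF W \<open>p > 0\<close>] e by simp
  show "F \<in> fam n" using nabla_fam[OF W] e by simp
  show "Domain_tr R \<subseteq> F" using W_domF[OF W assms(1)] e by simp
qed

lemma PhiS_mono: "C \<le> D \<Longrightarrow> PhiS n F C \<subseteq> PhiS n F D"
  unfolding PhiS_def le_fun_def by auto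



lemma W_from: assumes y: "y \<in> wIndSys p n" and p: "prime p" and hn: "h \<le> n"
  and b: "count M h \<le> 1" and a: "\<forall>k\<in>#M. k \<noteq> h \<longrightarrow> k < h \<and> {#k#} \<in> y h"
  and c: "h \<in># M \<longrightarrow> (\<forall>k\<in>#M. k \<noteq> h \<longrightarrow> {#h, k#} \<in> y h)"
  shows "M \<in> y h"
proof (cases "h \<in># M")
  case False
  have "\<forall>k\<in>#M. k < h \<and> {#k#} \<in> y h"
  proof
    fix k assume "k \<in># M"
    then have "k \<noteq> h" using False by auto
    then show "k < h \<and> {#k#} \<in> y h" using a \<open>k \<in># M\<close> by blast
  qed
  then show ?thesis using W_A[OF y p hn] by blast
next
  case True
  define M' where "M' = M - {#h#}"
  have MM: "M = add_mset h M'" using True unfolding M'_def by simp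
  have "count M' h = 0" using b True unfolding M'_def by simp
  then have nh: "h \<notin># M'" by (simp add: not_in_iff)
  have "\<forall>k\<in>#M'. k < h \<and> {#h, k#} \<in> y h"
  proof
    fix k assume kM: "k \<in># M'"
    then have kh: "k \<noteq> h" using nh by blast
    have kM2: "k \<in># M" using kM unfolding M'_def by (meson in_diffD)
    show "k < h \<and> {#h, k#} \<in> y h" using a kM2 kh c True by blast
  qed
  then have "add_mset h M' \<in> y h" by (rule W_B[OF y p hn])
  then show ?thesis unfolding MM[symmetric] .
qed

lemma PhiS_proper: "(k, h) \<in> PhiS n F C \<Longrightarrow> k < h \<Longrightarrow> h \<notin> F \<and> {#h, k#} \<in> C h"
  by (auto simp: PhiS_def idR_iff)

lemma gen_lift:
  assumes p: "prime p" and C: "C \<in> fib p n R F" and R': "R' \<in> transf n" and F': "F' \<in> fam n"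
    and RR: "R \<subseteq> R'" and FF: "F \<subseteq> F'" and DF': "Domain_tr R' \<subseteq> F'"
  defines "S2 \<equiv> idR n \<union> {(j, h). h \<notin> F' \<and> (\<exists>k. j \<le> k \<and> k < h \<and> (j, k) \<in> R' \<and> (k, h) \<in> PhiS n F C)}"
  shows "S2 \<in> Sieve n R' (Codomain_tr R' - F')" "Cof n R' F' S2 \<in> fib p n R' F'"
    "PhiS n F' (Cof n R' F' S2) = S2"
    "cocart_lift (wIndSys p n) (\<le>) leTF (\<lambda>C. (frakR n C, nabla n C)) C (R', F') (Cof n R' F' S2)"
proof -
  have R: "R \<in> transf n" and F: "F \<in> fam n" and DF: "Domain_tr R \<subseteq> F"
    using fib_transf[OF p C] by auto
  have PS: "PhiS n F C \<in> Sieve n R (Codomain_tr R - F)" using fib_Phi[OF p C] .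
  have PR: "PhiS n F C \<subseteq> R" using SieveD(2)[OF PS] .
  have CW: "C \<in> wIndSys p n" using fib_W[OF C] by simp
  have Ceq: "Cof n R F (PhiS n F C) = C" using fib_eq[OF p C] by simp
  note R'le = transfD(1)[OF R'] and R'id = transfD(2)[OF R'] and R'tr = transfD(3)[OF R']
  have S2E: "\<And>j h. (j, h) \<in> S2 \<Longrightarrow> (j = h \<and> h \<le> n) \<or>
       (h \<notin> F' \<and> (\<exists>k. j \<le> k \<and> k < h \<and> (j, k) \<in> R' \<and> (k, h) \<in> PhiS n F C))"
    unfolding S2_def by (auto simp: idR_iff)
  have S2I: "\<And>j h k. h \<notin> F' \<Longrightarrow> j \<le> k \<Longrightarrow> k < h \<Longrightarrow> (j, k) \<in> R' \<Longrightarrow> (k, h) \<in> PhiS n F C \<Longrightarrow> (j, h) \<in> S2"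
    unfolding S2_def by blast
  have S2id: "\<And>h. h \<le> n \<Longrightarrow> (h, h) \<in> S2" unfolding S2_def by (auto simp: idR_iff)
  have S2: "S2 \<in> Sieve n R' (Codomain_tr R' - F')"
  proof (rule SieveI)
    show "idR n \<subseteq> S2" unfolding S2_def by blast
    show "S2 \<subseteq> R'"
    proof
      fix x assume "x \<in> S2"
      then obtain j h where x: "x = (j, h)" and "(j, h) \<in> S2" by (cases x) auto
      then consider "j = h \<and> h \<le> n" | k where "(j, k) \<in> R'" "(k, h) \<in> PhiS n F C"
        using S2E by blast
      then show "x \<in> R'"
      proof cases
        case 1 then show ?thesis using x R'id by simp
      next
        case 2 then show ?thesis using x R'tr PR RR by blast
      qed
    qed
    show "\<forall>j h l. (j, h) \<in> S2 \<longrightarrow> l \<le> h \<longrightarrow> l \<in> Codomain_tr R' - F' \<longrightarrow> (min l j, l) \<in> S2"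
    proof (intro allI impI)
      fix j h l assume jh: "(j, h) \<in> S2" and lh: "l \<le> h" and l: "l \<in> Codomain_tr R' - F'"
      consider "j = h \<and> h \<le> n" | k where "h \<notin> F'" "j \<le> k" "k < h" "(j, k) \<in> R'" "(k, h) \<in> PhiS n F C"
        using S2E[OF jh] by blast
      then show "(min l j, l) \<in> S2"
      proof cases
        case 1 then show ?thesis using lh S2id by (simp add: min_absorb1)
      next
        case 2
        have kR: "(k, h) \<in> R" using 2 PR by blast
        then have "k \<in> Domain_tr R" using 2 unfolding Domain_tr_def by blast
        then have kF': "k \<in> F'" using DF FF by blast
        have kl: "k < l"
        proof (rule ccontr)
          assume "\<not> k < l"
          then have "l \<le> k" by simp
          then have "l \<in> F'" using famD(1)[OF F' kF'] by blast
          then show False using l by blast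
        qed
        have lC: "l \<in> Codomain_tr R - F" using kR 2 lh l FF unfolding Codomain_tr_def by blast
        have "(min l k, l) \<in> PhiS n F C" using SieveD(3)[OF PS 2(5) lh lC] .
        then have "(k, l) \<in> PhiS n F C" using kl by (simp add: min_absorb2)
        moreover have "min l j = j" using kl 2 by simp
        ultimately show ?thesis using S2I[of l j k] l 2 kl by simp
      qed
    qed
    show "\<forall>j h. (j, h) \<in> S2 \<longrightarrow> j < h \<longrightarrow> h \<in> Codomain_tr R' - F'"
    proof (intro allI impI)
      fix j h assume jh: "(j, h) \<in> S2" and "j < h"
      then obtain k where k: "h \<notin> F'" "k < h" "(k, h) \<in> PhiS n F C" using S2E[OF jh] by auto
      then have "(k, h) \<in> R'" using PR RR by blast
      then show "h \<in> Codomain_tr R' - F'" using k unfolding Codomain_tr_def by blast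
    qed
    show "\<forall>i j h. (i, j) \<in> R' \<longrightarrow> (j, h) \<in> S2 \<longrightarrow> j < h \<longrightarrow> (i, h) \<in> S2"
    proof (intro allI impI)
      fix i j h assume ij: "(i, j) \<in> R'" and jh: "(j, h) \<in> S2" and "j < h"
      then obtain k where k: "h \<notin> F'" "j \<le> k" "k < h" "(j, k) \<in> R'" "(k, h) \<in> PhiS n F C"
        using S2E[OF jh] by auto
      have "(i, k) \<in> R'" using R'tr[OF ij k(4)] .
      moreover have "i \<le> k" using R'le[OF ij] k(2) by simp
      ultimately show "(i, h) \<in> S2" using S2I k by blast
    qed
  qed
  then show "S2 \<in> Sieve n R' (Codomain_tr R' - F')" .
  have Dfib: "Cof n R' F' S2 \<in> fib p n R' F'" using fib_Cof[OF p R' F' DF' S2] .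
  then show "Cof n R' F' S2 \<in> fib p n R' F'" .
  show "PhiS n F' (Cof n R' F' S2) = S2" using Cof_Phi[OF R' S2] .
  let ?D = "Cof n R' F' S2"
  have CD: "C \<le> ?D"
  proof (rule le_funI, rule subsetI)
    fix h M assume M: "M \<in> C h"
    have "M \<in> Cof n R F (PhiS n F C) h" using M Ceq by simp
    then have m: "h \<le> n" "\<forall>k\<in>#M. (k, h) \<in> R"
      "h \<notin> F \<longrightarrow> count M h \<le> 1 \<and> (h \<in># M \<longrightarrow> (\<forall>k\<in>#M. (k, h) \<in> PhiS n F C))"
      unfolding Cof_iff by blast+
    have "h \<notin> F' \<longrightarrow> count M h \<le> 1 \<and> (h \<in># M \<longrightarrow> (\<forall>k\<in>#M. (k, h) \<in> S2))"
    proof (intro impI conjI ballI)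
      assume hF': "h \<notin> F'"
      then have hF: "h \<notin> F" using FF by blast
      show "count M h \<le> 1" using m(3) hF by blast
      fix k assume hM: "h \<in># M" and kM: "k \<in># M"
      have kP: "(k, h) \<in> PhiS n F C" using m(3) hF hM kM by blast
      show "(k, h) \<in> S2"
      proof (cases "k = h")
        case True then show ?thesis using S2id m(1) by simp
      next
        case False
        then have "k < h" using kP PR transfD(1)[OF R] by fastforce
        then show ?thesis using S2I[of h k k] hF' kP R'id m(1) by simp
      qed
    qed
    then show "M \<in> ?D h" unfolding Cof_iff using m(1,2) RR by blast
  qed
  have DY: "?D \<le> y" if y: "y \<in> wIndSys p n" and RY: "R' \<subseteq> frakR n y" and FY: "F' \<subseteq> nabla n y"
    and CY: "C \<le> y" for y
  proof (rule le_funI, rule subsetI)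
    fix h M assume "M \<in> ?D h"
    then have m: "h \<le> n" "\<forall>k\<in>#M. (k, h) \<in> R'"
      "h \<notin> F' \<longrightarrow> count M h \<le> 1 \<and> (h \<in># M \<longrightarrow> (\<forall>k\<in>#M. (k, h) \<in> S2))"
      unfolding Cof_iff by blast+
    have single: "\<forall>k\<in>#M. {#k#} \<in> y h" using m(2) RY by (auto simp: frakR_iff)
    show "M \<in> y h"
    proof (cases "h \<in> F'")
      case True
      then have "{#h, h#} \<in> y h" using FY by (auto simp: nabla_iff)
      then show ?thesis using W_all[OF y _ single] by blast
    next
      case False
      have a: "\<forall>k\<in>#M. k \<noteq> h \<longrightarrow> k < h \<and> {#k#} \<in> y h"
        using single m(2) R'le by fastforce
      have c: "h \<in># M \<longrightarrow> (\<forall>k\<in>#M. k \<noteq> h \<longrightarrow> {#h, k#} \<in> y h)"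
      proof (intro impI ballI)
        fix k assume hM: "h \<in># M" and kM: "k \<in># M" and kh: "k \<noteq> h"
        have "(k, h) \<in> S2" using m(3) False hM kM by blast
        then obtain k' where k': "(k, k') \<in> R'" "k' < h" "(k', h) \<in> PhiS n F C"
          using S2E kh by blast
        have "{#h, k'#} \<in> C h" using PhiS_proper[OF k'(3,2)] by blast
        then have "{#h, k'#} \<in> y h" using CY by (auto simp: le_fun_def)
        moreover have "{#k#} \<in> y k'" using k'(1) RY by (auto simp: frakR_iff)
        ultimately show "{#h, k#} \<in> y h" using W_G8[OF y] by blast
      qed
      show ?thesis using W_from[OF y p m(1) _ a c] m(3) False by blast
    qed
  qed
  show "cocart_lift (wIndSys p n) (\<le>) leTF (\<lambda>C. (frakR n C, nabla n C)) C (R', F') ?D"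
    unfolding cocart_lift_def
  proof (intro conjI ballI impI)
    show "?D \<in> wIndSys p n" using fib_W[OF Dfib] by simp
    show "(frakR n ?D, nabla n ?D) = (R', F')" using fib_W[OF Dfib] by simp
    fix y assume y: "y \<in> wIndSys p n" and le: "leTF (R', F') (frakR n y, nabla n y)"
    then have RY: "R' \<subseteq> frakR n y" and FY: "F' \<subseteq> nabla n y" by (auto simp: leTF_def)
    show "C \<le> y \<longleftrightarrow> ?D \<le> y"
    proof
      assume "C \<le> y" then show "?D \<le> y" using DY[OF y RY FY] by blast
    next
      assume "?D \<le> y" then show "C \<le> y" using CD by (rule order_trans[rotated])
    qed
  qed
qed



theorem corollaryC:
  fixes p n :: nat
  assumes "prime p"
  shows
   "(\<forall>C\<in>wIndSys p n. frakR n C \<in> transf n \<and> nabla n C \<in> fam n) \<and>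
    (\<forall>R\<in>transf n. \<forall>F\<in>fam n. \<not> Domain_tr R \<subseteq> F \<longrightarrow> fib p n R F = {}) \<and>
    (\<forall>R\<in>transf n. \<forall>F\<in>fam n. Codomain_tr R \<subseteq> F \<longrightarrow> (\<exists>!C. C \<in> fib p n R F)) \<and>
    (\<exists>\<Phi>. (\<forall>R\<in>transf n. \<forall>F\<in>fam n. Domain_tr R \<subseteq> F \<longrightarrow>
              bij_betw (\<Phi> R F) (fib p n R F) (Sieve n R (Codomain_tr R - F)) \<and>
              (\<forall>C\<in>fib p n R F. \<forall>D\<in>fib p n R F. C \<le> D \<longleftrightarrow> \<Phi> R F C \<subseteq> \<Phi> R F D)) \<and>
          cocart_fib (wIndSys p n) (\<le>) ((\<lambda>C. (frakR n C, nabla n C)) ` wIndSys p n) leTF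
                     (\<lambda>C. (frakR n C, nabla n C)) \<and>
          (\<forall>R\<in>transf n. \<forall>R'\<in>transf n. \<forall>F\<in>fam n. R \<subseteq> R' \<longrightarrow> Domain_tr R' \<subseteq> F \<longrightarrow>
              (\<forall>C\<in>fib p n R F. \<exists>D\<in>fib p n R' F.
                  \<Phi> R' F D = transportR n R' (\<Phi> R F C) \<and>
                  cocart_lift (wIndSys p n) (\<le>) leTF (\<lambda>C. (frakR n C, nabla n C)) C (R', F) D)) \<and>
          (\<forall>R\<in>transf n. \<forall>F\<in>fam n. \<forall>F'\<in>fam n. F \<subseteq> F' \<longrightarrow> Domain_tr R \<subseteq> F \<longrightarrow>
              (\<forall>C\<in>fib p n R F. \<exists>D\<in>fib p n R F'.
                  \<Phi> R F' D = restrictS n (Codomain_tr R - F') (\<Phi> R F C) \<and>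
                  cocart_lift (wIndSys p n) (\<le>) leTF (\<lambda>C. (frakR n C, nabla n C)) C (R, F') D)))"
proof -
  have p0: "p > 0" using assms prime_gt_0_nat by blast
  let ?W = "wIndSys p n" and ?pi = "\<lambda>C. (frakR n C, nabla n C)"
  have c1: "\<forall>C\<in>wIndSys p n. frakR n C \<in> transf n \<and> nabla n C \<in> fam n"
    using frakR_transf[OF _ p0] nabla_fam by blast
  have c2: "\<forall>R\<in>transf n. \<forall>F\<in>fam n. \<not> Domain_tr R \<subseteq> F \<longrightarrow> fib p n R F = {}"
  proof (intro ballI impI)
    fix R F assume "\<not> Domain_tr R \<subseteq> F"
    then show "fib p n R F = {}" using fib_transf(3)[OF assms] by blast
  qed
  have c3: "\<forall>R\<in>transf n. \<forall>F\<in>fam n. Codomain_tr R \<subseteq> F \<longrightarrow> (\<exists>!C. C \<in> fib p n R F)"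
  proof (intro ballI impI)
    fix R F assume R: "R \<in> transf n" and F: "F \<in> fam n" and CF: "Codomain_tr R \<subseteq> F"
    have DC: "Domain_tr R \<subseteq> Codomain_tr R"
      unfolding Domain_tr_def Codomain_tr_def by (auto, meson le_trans less_imp_le)
    then have DF: "Domain_tr R \<subseteq> F" using CF by blast
    have E: "Codomain_tr R - F = {}" using CF by blast
    have idS: "idR n \<in> Sieve n R (Codomain_tr R - F)"
      unfolding E
    proof (rule SieveI)
      show "idR n \<subseteq> R" using transfD(2)[OF R] by (auto simp: idR_def)
    qed (auto simp: idR_iff)
    have uniq: "C = Cof n R F (idR n)" if C: "C \<in> fib p n R F" for C
    proof -
      have PS: "PhiS n F C \<in> Sieve n R (Codomain_tr R - F)" using fib_Phi[OF assms C] .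
      have "PhiS n F C = idR n"
      proof
        show "idR n \<subseteq> PhiS n F C" using SieveD(1)[OF PS] .
        show "PhiS n F C \<subseteq> idR n"
        proof
          fix x assume x: "x \<in> PhiS n F C"
          obtain k h :: nat where xk: "x = (k, h)" by fastforce
          have kh: "k \<le> h" "h \<le> n" using transfD(1)[OF R] SieveD(2)[OF PS] x xk by auto
          have "\<not> k < h" using SieveD(4)[OF PS] x xk E by blast
          then show "x \<in> idR n" using kh xk by (simp add: idR_iff)
        qed
      qed
      moreover have "Cof n R F (PhiS n F C) = C" using fib_eq[OF assms C] by simp
      ultimately show ?thesis by simp
    qed
    show "\<exists>!C. C \<in> fib p n R F"
    proof (rule ex1I)
      show "Cof n R F (idR n) \<in> fib p n R F" using fib_Cof[OF assms R F DF idS] .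
      fix C assume "C \<in> fib p n R F" then show "C = Cof n R F (idR n)" by (rule uniq)
    qed
  qed
  define \<Phi> where "\<Phi> = (\<lambda>(R :: (nat \<times> nat) set) F (C :: nat \<Rightarrow> nat multiset set). PhiS n F C)"
  have c4: "\<forall>R\<in>transf n. \<forall>F\<in>fam n. Domain_tr R \<subseteq> F \<longrightarrow>
              bij_betw (\<Phi> R F) (fib p n R F) (Sieve n R (Codomain_tr R - F)) \<and>
              (\<forall>C\<in>fib p n R F. \<forall>D\<in>fib p n R F. C \<le> D \<longleftrightarrow> \<Phi> R F C \<subseteq> \<Phi> R F D)"
  proof (intro ballI impI, rule conjI)
    fix R F assume R: "R \<in> transf n" and F: "F \<in> fam n" and DF: "Domain_tr R \<subseteq> F"
    have ceq: "\<And>C. C \<in> fib p n R F \<Longrightarrow> Cof n R F (PhiS n F C) = C"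
      using fib_eq[OF assms] by (metis)
    show "bij_betw (\<Phi> R F) (fib p n R F) (Sieve n R (Codomain_tr R - F))"
      unfolding bij_betw_def
    proof
      show "inj_on (\<Phi> R F) (fib p n R F)"
      proof (rule inj_onI)
        fix C D assume C: "C \<in> fib p n R F" and D: "D \<in> fib p n R F" and e: "\<Phi> R F C = \<Phi> R F D"
        have "C = Cof n R F (PhiS n F C)" using ceq[OF C] by simp
        also have "\<dots> = Cof n R F (PhiS n F D)" using e by (simp add: \<Phi>_def)
        also have "\<dots> = D" using ceq[OF D] .
        finally show "C = D" .
      qed
      show "\<Phi> R F ` fib p n R F = Sieve n R (Codomain_tr R - F)"
      proof
        show "\<Phi> R F ` fib p n R F \<subseteq> Sieve n R (Codomain_tr R - F)"
          using fib_Phi[OF assms] by (auto simp: \<Phi>_def)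
        show "Sieve n R (Codomain_tr R - F) \<subseteq> \<Phi> R F ` fib p n R F"
        proof
          fix S assume S: "S \<in> Sieve n R (Codomain_tr R - F)"
          have "S = \<Phi> R F (Cof n R F S)" using Cof_Phi[OF R S] by (simp add: \<Phi>_def)
          moreover have "Cof n R F S \<in> fib p n R F" using fib_Cof[OF assms R F DF S] .
          ultimately show "S \<in> \<Phi> R F ` fib p n R F" by blast
        qed
      qed
    qed
    show "\<forall>C\<in>fib p n R F. \<forall>D\<in>fib p n R F. C \<le> D \<longleftrightarrow> \<Phi> R F C \<subseteq> \<Phi> R F D"
    proof (intro ballI iffI)
      fix C D :: "nat \<Rightarrow> nat multiset set" assume "C \<le> D" then show "\<Phi> R F C \<subseteq> \<Phi> R F D"
        unfolding \<Phi>_def using PhiS_mono by simp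
    next
      fix C D assume C: "C \<in> fib p n R F" and D: "D \<in> fib p n R F" and s: "\<Phi> R F C \<subseteq> \<Phi> R F D"
      have "Cof n R F (PhiS n F C) \<le> Cof n R F (PhiS n F D)"
        using s by (intro Cof_mono) (simp add: \<Phi>_def)
      then show "C \<le> D" using ceq[OF C] ceq[OF D] by simp
    qed
  qed
  have c5: "cocart_fib ?W (\<le>) (?pi ` ?W) leTF ?pi"
    unfolding cocart_fib_def
  proof (intro conjI ballI impI)
    fix x assume "x \<in> ?W" then show "?pi x \<in> ?pi ` ?W" by blast
  next
    fix x y assume "x \<in> ?W" "y \<in> ?W" "x \<le> y"
    then show "leTF (?pi x) (?pi y)"
      unfolding leTF_def frakR_def nabla_def le_fun_def by auto
  next
    fix q q' x assume q: "q \<in> ?pi ` ?W" and q': "q' \<in> ?pi ` ?W" and le: "leTF q q'"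
      and x: "x \<in> ?W" and px: "?pi x = q"
    obtain x' where x': "x' \<in> ?W" "q' = ?pi x'" using q' by blast
    have xf: "x \<in> fib p n (frakR n x) (nabla n x)" using x by (simp add: fib_def)
    have x'f: "x' \<in> fib p n (frakR n x') (nabla n x')" using x' by (simp add: fib_def)
    have le2: "frakR n x \<subseteq> frakR n x'" "nabla n x \<subseteq> nabla n x'"
      using le px x' by (auto simp: leTF_def)
    show "\<exists>t. cocart_lift ?W (\<le>) leTF ?pi x q' t"
      using gen_lift(4)[OF assms xf fib_transf(1)[OF assms x'f] fib_transf(2)[OF assms x'f] le2 fib_transf(3)[OF assms x'f]] x'(2) by blast
  qed
  have c6: "\<forall>R\<in>transf n. \<forall>R'\<in>transf n. \<forall>F\<in>fam n. R \<subseteq> R' \<longrightarrow> Domain_tr R' \<subseteq> F \<longrightarrow>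
              (\<forall>C\<in>fib p n R F. \<exists>D\<in>fib p n R' F.
                  \<Phi> R' F D = transportR n R' (\<Phi> R F C) \<and>
                  cocart_lift ?W (\<le>) leTF ?pi C (R', F) D)"
  proof (intro ballI impI)
    fix R R' F C assume R: "R \<in> transf n" and R': "R' \<in> transf n" and F: "F \<in> fam n"
      and RR: "R \<subseteq> R'" and DF: "Domain_tr R' \<subseteq> F" and C: "C \<in> fib p n R F"
    let ?S2 = "idR n \<union> {(j, h). h \<notin> F \<and> (\<exists>k. j \<le> k \<and> k < h \<and> (j, k) \<in> R' \<and> (k, h) \<in> PhiS n F C)}"
    note L = gen_lift[OF assms C R' F RR order_refl DF]
    have eq: "?S2 = transportR n R' (PhiS n F C)"
      unfolding transportR_def using PhiS_proper[of _ _ n F C] by blast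
    show "\<exists>D\<in>fib p n R' F. \<Phi> R' F D = transportR n R' (\<Phi> R F C) \<and> cocart_lift ?W (\<le>) leTF ?pi C (R', F) D"
      using L(2,3,4) eq unfolding \<Phi>_def by auto
  qed
  have c7: "\<forall>R\<in>transf n. \<forall>F\<in>fam n. \<forall>F'\<in>fam n. F \<subseteq> F' \<longrightarrow> Domain_tr R \<subseteq> F \<longrightarrow>
              (\<forall>C\<in>fib p n R F. \<exists>D\<in>fib p n R F'.
                  \<Phi> R F' D = restrictS n (Codomain_tr R - F') (\<Phi> R F C) \<and>
                  cocart_lift ?W (\<le>) leTF ?pi C (R, F') D)"
  proof (intro ballI impI)
    fix R F F' C assume R: "R \<in> transf n" and F: "F \<in> fam n" and F': "F' \<in> fam n"
      and FF: "F \<subseteq> F'" and DF: "Domain_tr R \<subseteq> F" and C: "C \<in> fib p n R F"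
    let ?S2 = "idR n \<union> {(j, h). h \<notin> F' \<and> (\<exists>k. j \<le> k \<and> k < h \<and> (j, k) \<in> R \<and> (k, h) \<in> PhiS n F C)}"
    have DF': "Domain_tr R \<subseteq> F'" using DF FF by blast
    note L = gen_lift[OF assms C R F' order_refl FF DF']
    have PS: "PhiS n F C \<in> Sieve n R (Codomain_tr R - F)" using fib_Phi[OF assms C] .
    have PR: "PhiS n F C \<subseteq> R" using SieveD(2)[OF PS] .
    have eq: "?S2 = restrictS n (Codomain_tr R - F') (PhiS n F C)"
    proof
      show "?S2 \<subseteq> restrictS n (Codomain_tr R - F') (PhiS n F C)"
      proof
        fix x assume x: "x \<in> ?S2"
        show "x \<in> restrictS n (Codomain_tr R - F') (PhiS n F C)"
        proof (cases "x \<in> idR n")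
          case True then show ?thesis by (simp add: restrictS_def)
        next
          case False
          then obtain j h k where xj: "x = (j, h)" "h \<notin> F'" "j \<le> k" "k < h" "(j, k) \<in> R"
            "(k, h) \<in> PhiS n F C" using x by blast
          have "(j, h) \<in> PhiS n F C" using SieveD(5)[OF PS xj(5,6,4)] .
          moreover have "h \<in> Codomain_tr R" using PR xj unfolding Codomain_tr_def by blast
          ultimately show ?thesis using xj by (simp add: restrictS_def)
        qed
      qed
      show "restrictS n (Codomain_tr R - F') (PhiS n F C) \<subseteq> ?S2"
      proof
        fix x assume x: "x \<in> restrictS n (Codomain_tr R - F') (PhiS n F C)"
        show "x \<in> ?S2"
        proof (cases "x \<in> idR n")
          case True then show ?thesis by blast
        next
          case False
          then obtain k h where xk: "x = (k, h)" "(k, h) \<in> PhiS n F C" "h \<notin> F'"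
            using x unfolding restrictS_def by blast
          have kh: "k \<le> h" "h \<le> n" using transfD(1)[OF R] PR xk by auto
          have "k \<noteq> h" using False xk kh by (simp add: idR_iff)
          then have "k < h" using kh by simp
          moreover have "(k, k) \<in> R" using transfD(2)[OF R] kh \<open>k < h\<close> by simp
          ultimately show ?thesis using xk by blast
        qed
      qed
    qed
    show "\<exists>D\<in>fib p n R F'. \<Phi> R F' D = restrictS n (Codomain_tr R - F') (\<Phi> R F C) \<and> cocart_lift ?W (\<le>) leTF ?pi C (R, F') D"
      using L(2,3,4) eq unfolding \<Phi>_def by auto
  qed
  show ?thesis
    apply (intro conjI)
       apply (rule c1)
      apply (rule c2)
     apply (rule c3)
    apply (rule exI[of _ \<Phi>])
    using c4 c5 c6 c7 by (intro conjI)
qed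



end
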